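(* Let $A\in\mathbb{R}^{n\times n}$. (a) For every integer $k\ge0$, $(A\,\underline{\otimes}\, I)^k = (I\,\underline{\otimes}\, A)^k = \frac{1}{2^k}\sum_{i=0}^k\binom{k}{i}A^{k-i}\,\underline{\otimes}\, A^i$. (b) $\exp(A\,\underline{\oplus}\, A) = \exp(A)\,\underline{\otimes}\,\exp(A)$. (c) In general $\exp(A\,\underline{\oplus}\, B)\ne\exp(A)\,\underline{\otimes}\,\exp(B)$; i.e., there exist $n$ and $A,B\in\mathbb{R}^{n\times n}$ with $\exp(A\,\underline{\oplus}\, B)\ne\exp(A)\,\underline{\otimes}\,\exp(B)$.
   Context: Let $\underline{n}=n(n+1)/2$, $\operatorname{vec}$ column-stacking vectorization, $\otimes$ the Kronecker product, $e_1,\dots,e_n$ the standard basis. Enumerate pairs $(r,c)$, $1\le r\le c\le n$, in the order $(1,1),\dots,(1,n),(2,2),\dots,(2,n),\dots,(n,n)$ as $(r(\ell),c(\ell))$, $\ell=1,\dots,\underline{n}$; set $E_\ell=e_{r(\ell)}e_{r(\ell)}^T$ if $r(\ell)=c(\ell)$ and $E_\ell=\frac{\sqrt2}{2}(e_{r(\ell)}e_{c(\ell)}^T+e_{c(\ell)}e_{r(\ell)}^T)$ otherwise; $W_n\in\mathbb{R}^{\underline{n}\times n^2}$ has $\ell$-th row $\operatorname{vec}(E_\ell)^T$. The symmetric Kronecker product of $A,B\in\mathbb{R}^{n\times n}$ is $A\,\underline{\otimes}\, B = W_n(A\otimes B)W_n^T\in\mathbb{R}^{\underline{n}\times\underline{n}}$,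 and the symmetric Kronecker sum is $A\,\underline{\oplus}\, B = A\,\underline{\otimes}\, I + I\,\underline{\otimes}\, B$. $\exp$ is the matrix exponential. *)

theory Defs
  imports Complex_Main "Jordan_Normal_Form.Matrix"
begin

definition tri :: "nat \<Rightarrow> nat" where
  "tri n = n * (n + 1) div 2"

definition sym_pairs :: "nat \<Rightarrow> (nat \<times> nat) list" where
  "sym_pairs n = concat (map (\<lambda>r. map (\<lambda>c. (r, c)) [r..<n]) [0..<n])"

definition sym_basis :: "nat \<Rightarrow> nat \<Rightarrow> real mat" where
  "sym_basis n l = (let (r, c) = sym_pairs n ! l in
     if r = c then mat n n (\<lambda>(a, b). if a = r \<and> b = r then 1 else 0)
     else mat n n (\<lambda>(a, b). (sqrt 2 / 2) *
        ((if a = r \<and> b = c then 1 else 0) + (if a = c \<and> b = r then 1 else 0))))"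

(* column-stacking vectorization *)
definition vecm :: "'a mat \<Rightarrow> 'a vec" where
  "vecm M = vec (dim_row M * dim_col M) (\<lambda>m. M $$ (m mod dim_row M, m div dim_row M))"

definition Wmat :: "nat \<Rightarrow> real mat" where
  "Wmat n = mat_of_rows (n * n) (map (\<lambda>l. vecm (sym_basis n l)) [0..<tri n])"

definition kron :: "'a :: times mat \<Rightarrow> 'a mat \<Rightarrow> 'a mat" where
  "kron A B = mat (dim_row A * dim_row B) (dim_col A * dim_col B)
     (\<lambda>(i, j). A $$ (i div dim_row B, j div dim_col B) * B $$ (i mod dim_row B, j mod dim_col B))"

definition skron :: "real mat \<Rightarrow> real mat \<Rightarrow> real mat" where
  "skron A B = Wmat (dim_row A) * kron A B * transpose_mat (Wmat (dim_row A))"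

definition ssum :: "real mat \<Rightarrow> real mat \<Rightarrow> real mat" where
  "ssum A B = skron A (1\<^sub>m (dim_row A)) + skron (1\<^sub>m (dim_row A)) B"

definition mexp :: "real mat \<Rightarrow> real mat" where
  "mexp M = mat (dim_row M) (dim_col M) (\<lambda>(i, j). \<Sum>k. (M ^\<^sub>m k) $$ (i, j) / fact k)"

definition msum :: "nat \<Rightarrow> ('b \<Rightarrow> real mat) \<Rightarrow> 'b set \<Rightarrow> real mat" where
  "msum d f S = mat d d (\<lambda>(i, j). \<Sum>x\<in>S. f x $$ (i, j))"

end

theory Submission
  imports Defs
begin
definition bv :: "nat \<times> nat \<Rightarrow> nat \<Rightarrow> nat \<Rightarrow> real" where
  "bv p i j = (if fst p = snd p then (if i = fst p \<and> j = fst p then 1 else 0)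
     else sqrt 2 / 2 * ((if i = fst p \<and> j = snd p then 1 else 0) + (if i = snd p \<and> j = fst p then 1 else 0)))"

lemma set_sym_pairs: "set (sym_pairs n) = {(r,c). r \<le> c \<and> c < n}"
  apply (auto simp: sym_pairs_def)
  subgoal for a b by (intro bexI[of _ a]) auto
  done

lemma distinct_sym_pairs: "distinct (sym_pairs n)"
  unfolding sym_pairs_def
  apply (rule distinct_concat)
    apply (auto simp: distinct_map inj_on_def)
  subgoal for x y
    apply (drule arg_cong[of _ _ hd])
    apply (simp add: upt_conv_Cons)
    done
  done

lemma length_sym_pairs: "length (sym_pairs n) = tri n"
proof -
  have "length (sym_pairs n) = (\<Sum>r<n. n - r)"
    by (simp add: sym_pairs_def length_concat sum_list_sum_nth atLeast0LessThan comp_def)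
  also have "\<dots> = tri n"
  proof (induction n)
    case 0 then show ?case by (simp add: tri_def)
  next
    case (Suc n)
    have "(\<Sum>r<Suc n. Suc n - r) = (\<Sum>r<n. (n - r) + 1) + 1"
      by (simp add: Suc_diff_le)
    also have "\<dots> = (\<Sum>r<n. n - r) + (\<Sum>r<n. 1) + 1" by (subst sum.distrib[symmetric]) simp
    also have "\<dots> = tri n + n + 1" using Suc by simp
    also have "\<dots> = tri (Suc n)"
    proof -
      have "Suc n * (Suc n + 1) = n * (n + 1) + 2 * (n + 1)" by (simp add: algebra_simps)
      then show ?thesis unfolding tri_def by simp
    qed
    finally show ?case .
  qed
  finally show ?thesis .
qed

lemma sum_sym_pairs: "(\<Sum>l<tri n. f (sym_pairs n ! l)) = (\<Sum>p\<in>{(r,c). r \<le> c \<and> c < n}. f p)"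
proof -
  have "(\<Sum>l<tri n. f (sym_pairs n ! l)) = sum_list (map f (sym_pairs n))"
    by (simp add: sum_list_sum_nth length_sym_pairs atLeast0LessThan)
  also have "\<dots> = (\<Sum>p\<in>set (sym_pairs n). f p)"
    by (rule sum_list_distinct_conv_sum_set[OF distinct_sym_pairs])
  finally show ?thesis by (simp add: set_sym_pairs)
qed

lemma sym_pairs_nth: "l < tri n \<Longrightarrow> fst (sym_pairs n ! l) \<le> snd (sym_pairs n ! l) \<and> snd (sym_pairs n ! l) < n"
proof -
  assume l: "l < tri n"
  have "sym_pairs n ! l \<in> set (sym_pairs n)" using l by (simp add: length_sym_pairs)
  moreover obtain r c where "sym_pairs n ! l = (r,c)" by fastforce
  ultimately show ?thesis by (simp add: set_sym_pairs)
qed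

lemma sym_basis_eq: "sym_pairs n ! l = (r,c) \<Longrightarrow> sym_basis n l = (if r = c then mat n n (\<lambda>(a, b). if a = r \<and> b = r then 1 else 0)
     else mat n n (\<lambda>(a, b). (sqrt 2 / 2) *
        ((if a = r \<and> b = c then 1 else 0) + (if a = c \<and> b = r then 1 else 0))))"
proof -
  assume sp: "sym_pairs n ! l = (r,c)"
  show ?thesis unfolding sym_basis_def sp Let_def by simp
qed

lemma sym_basis_carrier: "sym_basis n l \<in> carrier_mat n n"
proof -
  obtain r c where sp: "sym_pairs n ! l = (r,c)" by fastforce
  show ?thesis using sym_basis_eq[OF sp] by simp
qed

lemma sym_basis_bv: "i < n \<Longrightarrow> j < n \<Longrightarrow> sym_basis n l $$ (i,j) = bv (sym_pairs n ! l) i j"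
proof -
  assume ij: "i < n" "j < n"
  obtain r c where sp: "sym_pairs n ! l = (r,c)" by fastforce
  have "sym_basis n l $$ (i,j) = (if r = c then (if i = r \<and> j = r then 1 else 0) else sqrt 2/2 * ((if i = r \<and> j = c then 1 else 0) + (if i = c \<and> j = r then 1 else 0)))"
    using ij unfolding sym_basis_eq[OF sp] by (simp only: if_distrib[of "\<lambda>M. M $$ (i,j)"] index_mat prod.case)
  also have "\<dots> = bv (r,c) i j" unfolding bv_def fst_conv snd_conv by (rule refl)
  finally show ?thesis unfolding sp .
qed

lemma bv_sym: "bv p i j = bv p j i"
  unfolding bv_def by (simp only: conj_commute[of "j = _"] add.commute[of "if i = fst p \<and> j = snd p then 1 else 0"])

lemma bv_nz: assumes "fst p \<le> snd p" "bv p i j \<noteq> 0" shows "p = (min i j, max i j)"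
proof (cases p)
  case (Pair r c)
  have "(i = r \<and> j = c) \<or> (i = c \<and> j = r)"
  proof (rule ccontr)
    assume a: "\<not> ((i = r \<and> j = c) \<or> (i = c \<and> j = r))"
    have "bv p i j = 0" 
    proof (cases "r = c")
      case True then show ?thesis using a Pair unfolding bv_def by auto
    next
      case False
      have "(if i = r \<and> j = c then 1 else 0) = (0::real)" "(if i = c \<and> j = r then 1 else 0) = (0::real)" using a by auto
      then show ?thesis using False Pair unfolding bv_def by simp
    qed
    with assms show False by simp
  qed
  with Pair assms(1) show ?thesis by (auto simp: min_def max_def)
qed

lemma K1:
  assumes "i < n" "j < n" "a < n" "b < n"
  shows "(\<Sum>l<tri n. sym_basis n l $$ (i,j) * sym_basis n l $$ (a,b)) =
     ((if i = a \<and> j = b then 1 else 0) + (if i = b \<and> j = a then 1 else 0)) / 2"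
proof -
  let ?P = "{(r,c). r \<le> c \<and> c < n}"
  have "(\<Sum>l<tri n. sym_basis n l $$ (i,j) * sym_basis n l $$ (a,b)) = (\<Sum>p\<in>?P. bv p i j * bv p a b)"
    using assms sum_sym_pairs[of "\<lambda>p. bv p i j * bv p a b" n] by (simp add: sym_basis_bv)
  also have "\<dots> = bv (min i j, max i j) i j * bv (min i j, max i j) a b"
  proof -
    have fin: "finite ?P" by (rule finite_subset[of _ "{..<n} \<times> {..<n}"]) auto
    have mem: "(min i j, max i j) \<in> ?P" using assms by auto
    have z: "bv p i j * bv p a b = 0" if p: "p \<in> ?P - {(min i j, max i j)}" for p
    proof -
      have "fst p \<le> snd p" "p \<noteq> (min i j, max i j)" using p by auto
      then have "bv p i j = 0" using bv_nz by blast
      then show ?thesis by simp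
    qed
    have "(\<Sum>p\<in>?P - {(min i j, max i j)}. bv p i j * bv p a b) = 0"
      by (rule sum.neutral) (use z in blast)
    then show ?thesis using sum.remove[OF fin mem, of "\<lambda>p. bv p i j * bv p a b"] by simp
  qed
  also have "\<dots> = ((if i = a \<and> j = b then 1 else 0) + (if i = b \<and> j = a then 1 else 0)) / 2"
  proof -
    have ss: "sqrt 2 / 2 * (sqrt 2 / 2) = (1/2::real)"
    proof -
      have "sqrt 2 / 2 * (sqrt 2 / 2) = (sqrt 2 * sqrt 2) / (4::real)" by simp
      also have "\<dots> = 1/2" by simp
      finally show ?thesis .
    qed
    consider "i = j" | "i < j" | "j < i" by linarith
    then show ?thesis
    proof cases
      case 1 then show ?thesis by (simp add: bv_def)
    next
      case 2
      then have h1: "bv (min i j, max i j) i j = sqrt 2 / 2" by (simp add: bv_def)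
      have h2: "bv (min i j, max i j) a b = sqrt 2 / 2 * ((if a = i \<and> b = j then 1 else 0) + (if a = j \<and> b = i then 1 else 0))"
        using 2 by (simp add: bv_def)
      show ?thesis apply (simp only: h1 h2 mult.assoc[symmetric] ss) using 2 by auto
    next
      case 3
      then have h1: "bv (min i j, max i j) i j = sqrt 2 / 2" by (simp add: bv_def)
      have h2: "bv (min i j, max i j) a b = sqrt 2 / 2 * ((if a = j \<and> b = i then 1 else 0) + (if a = i \<and> b = j then 1 else 0))"
        using 3 by (simp add: bv_def)
      show ?thesis apply (simp only: h1 h2 mult.assoc[symmetric] ss) using 3 by auto
    qed
  qed
  finally show ?thesis .
qed

definition sip :: "nat \<Rightarrow> nat \<Rightarrow> real mat \<Rightarrow> real" where
  "sip n l Z = (\<Sum>i<n. \<Sum>j<n. sym_basis n l $$ (i,j) * Z $$ (i,j))"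

lemma sum2_delta:
  assumes "r < (n::nat)" "c < n"
  shows "(\<Sum>i<n. \<Sum>j<n. if i = r \<and> j = c then f i j else 0) = (f r c :: real)"
proof -
  have "(\<Sum>j<n. if i = r \<and> j = c then f i j else 0) = (if i = r then f i c else 0)" for i
    using assms by (cases "i = r") (simp_all add: sum.delta)
  then show ?thesis using assms by (simp add: sum.delta)
qed

lemma sum4_perm:
  "(\<Sum>a<(n::nat). \<Sum>b<n. \<Sum>c<n. \<Sum>d<n. f a b c d) = (\<Sum>c<n. \<Sum>d<n. \<Sum>b<n. \<Sum>a<n. (f a b c d :: real))"
proof -
  have "(\<Sum>a<n. \<Sum>b<n. \<Sum>c<n. \<Sum>d<n. f a b c d) = (\<Sum>a<n. \<Sum>c<n. \<Sum>b<n. \<Sum>d<n. f a b c d)"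
    by (rule sum.cong[OF refl], rule sum.swap)
  also have "\<dots> = (\<Sum>c<n. \<Sum>a<n. \<Sum>b<n. \<Sum>d<n. f a b c d)"
    by (rule sum.swap)
  also have "\<dots> = (\<Sum>c<n. \<Sum>a<n. \<Sum>d<n. \<Sum>b<n. f a b c d)"
    by (rule sum.cong[OF refl], rule sum.cong[OF refl], rule sum.swap)
  also have "\<dots> = (\<Sum>c<n. \<Sum>d<n. \<Sum>a<n. \<Sum>b<n. f a b c d)"
    by (rule sum.cong[OF refl], rule sum.swap)
  also have "\<dots> = (\<Sum>c<n. \<Sum>d<n. \<Sum>b<n. \<Sum>a<n. f a b c d)"
    by (rule sum.cong[OF refl], rule sum.cong[OF refl], rule sum.swap)
  finally show ?thesis .
qed

lemma sum_sq_index: "(\<Sum>p<(n::nat)*n. g (p mod n) (p div n)) = (\<Sum>j<n. \<Sum>i<n. (g i j :: real))"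
proof -
  have "(\<Sum>p<n*n. g (p mod n) (p div n)) = (\<Sum>m<n. \<Sum>p\<in>{m*n..<m*n+n}. g (p mod n) (p div n))"
    by (rule sum.nat_group[symmetric])
  also have "\<dots> = (\<Sum>m<n. \<Sum>i<n. g i m)"
  proof (rule sum.cong[OF refl])
    fix m :: nat assume "m \<in> {..<n}"
    have "(\<Sum>p\<in>{m*n..<m*n+n}. g (p mod n) (p div n)) = (\<Sum>p\<in>{0+m*n..<n+m*n}. g (p mod n) (p div n))"
      by (simp add: add.commute)
    also have "\<dots> = (\<Sum>i\<in>{0..<n}. g ((i + m*n) mod n) ((i + m*n) div n))"
      by (rule sum.shift_bounds_nat_ivl)
    also have "\<dots> = (\<Sum>i<n. g i m)"
      by (intro sum.cong) auto
    finally show "(\<Sum>p\<in>{m*n..<m*n+n}. g (p mod n) (p div n)) = (\<Sum>i<n. g i m)" .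
  qed
  finally show ?thesis .
qed

lemma mult_entry:
  assumes "A \<in> carrier_mat m p" "B \<in> carrier_mat p q" "i < m" "j < q"
  shows "(A * B) $$ (i,j) = (\<Sum>k<p. A $$ (i,k) * B $$ (k,j))"
  using assms by (simp add: scalar_prod_def atLeast0LessThan)

lemma ip_triple:
  assumes "P \<in> carrier_mat n n" "M \<in> carrier_mat n n" "Q \<in> carrier_mat n n"
  shows "sip n l (P * M * Q) = (\<Sum>i<n. \<Sum>j<n. \<Sum>j'<n. \<Sum>i'<n.
      sym_basis n l $$ (i,j) * P $$ (i,i') * M $$ (i',j') * Q $$ (j',j))"
proof -
  have "(P * M * Q) $$ (i,j) = (\<Sum>j'<n. \<Sum>i'<n. P $$ (i,i') * M $$ (i',j') * Q $$ (j',j))"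
    if "i < n" "j < n" for i j
  proof -
    have "(P * M * Q) $$ (i,j) = (\<Sum>j'<n. (P * M) $$ (i,j') * Q $$ (j',j))"
      using assms that by (intro mult_entry) auto
    also have "\<dots> = (\<Sum>j'<n. (\<Sum>i'<n. P $$ (i,i') * M $$ (i',j')) * Q $$ (j',j))"
      using assms that by (intro sum.cong refl) (subst mult_entry[of P n n M n], auto)
    finally show ?thesis by (simp add: sum_distrib_right)
  qed
  then show ?thesis unfolding sip_def by (simp add: sum_distrib_left mult.assoc)
qed

lemma bv_diag: "bv (r,r) i j = (if i = r \<and> j = r then 1 else 0)"
  unfolding bv_def by simp

lemma bv_off: "r \<noteq> c \<Longrightarrow> bv (r,c) i j = sqrt 2 / 2 * ((if i = r \<and> j = c then 1 else 0) + (if i = c \<and> j = r then 1 else 0))"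
  unfolding bv_def by simp

lemma ss: "sqrt 2 / 2 * (sqrt 2 / 2) = (1/2::real)"
proof -
  have "sqrt 2 / 2 * (sqrt 2 / 2) = (sqrt 2 * sqrt 2) / (4::real)" by simp
  also have "\<dots> = 1/2" by simp
  finally show ?thesis .
qed

lemma ortho:
  assumes "l < tri n" "l' < tri n"
  shows "sip n l (sym_basis n l') = (if l = l' then 1 else 0)"
proof -
  let ?p = "sym_pairs n ! l" and ?q = "sym_pairs n ! l'"
  have "sip n l (sym_basis n l') = (\<Sum>i<n. \<Sum>j<n. bv ?p i j * bv ?q i j)"
    unfolding sip_def by (simp add: sym_basis_bv)
  also have "\<dots> = (if l = l' then 1 else 0)"
  proof (cases "l = l'")
    case False
    then have ne: "?p \<noteq> ?q"
      using assms distinct_sym_pairs nth_eq_iff_index_eq[of "sym_pairs n" l l']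
      by (simp add: length_sym_pairs)
    have z: "bv ?p i j * bv ?q i j = 0" for i j
    proof (rule ccontr)
      assume "bv ?p i j * bv ?q i j \<noteq> 0"
      then have "bv ?p i j \<noteq> 0" "bv ?q i j \<noteq> 0" by auto
      then have "?p = (min i j, max i j)" "?q = (min i j, max i j)"
        using bv_nz sym_pairs_nth assms by blast+
      with ne show False by simp
    qed
    have "(\<Sum>i<n. \<Sum>j<n. bv ?p i j * bv ?q i j) = 0" by (intro sum.neutral ballI z)
    then show ?thesis using False by simp
  next
    case True
    obtain r c where sp: "?p = (r,c)" by fastforce
    have rc: "r \<le> c" "c < n" using sym_pairs_nth[OF assms(1)] sp by auto
    have ss: "sqrt 2 / 2 * (sqrt 2 / 2) = (1/2::real)"
    proof -
      have "sqrt 2 / 2 * (sqrt 2 / 2) = (sqrt 2 * sqrt 2) / (4::real)" by simp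
      also have "\<dots> = 1/2" by simp
      finally show ?thesis .
    qed
    have "(\<Sum>i<n. \<Sum>j<n. bv (r,c) i j * bv (r,c) i j) = 1"
    proof (cases "r = c")
      case True
      have pw: "bv (r,c) i j * bv (r,c) i j = (if i = r \<and> j = c then 1 else 0)" for i j
      proof -
        have "bv (r,c) i j = (if i = r \<and> j = c then 1 else 0)" using bv_diag[of r i j] True by simp
        then show ?thesis by simp
      qed
      have "(\<Sum>i<n. \<Sum>j<n. bv (r,c) i j * bv (r,c) i j) = (\<Sum>i<n. \<Sum>j<n. if i = r \<and> j = c then 1 else 0)"
        by (simp only: pw)
      also have "\<dots> = 1" using sum2_delta[of r n c "\<lambda>i j. 1"] rc by simp
      finally show ?thesis .
    next
      case False
      have pw: "bv (r,c) i j * bv (r,c) i j = (if i = r \<and> j = c then 1/2 else 0) + (if i = c \<and> j = r then 1/2 else 0)" for i j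
      proof (cases "i = r \<and> j = c")
        case t1: True
        have f2: "\<not> (i = c \<and> j = r)" using t1 False by auto
        have h: "bv (r,c) i j = sqrt 2 / 2"
          by (simp only: bv_off[OF False] if_P[OF t1] if_not_P[OF f2], simp?)
        show ?thesis by (simp only: h ss if_P[OF t1] if_not_P[OF f2], simp?)
      next
        case f1: False
        show ?thesis
        proof (cases "i = c \<and> j = r")
          case t2: True
          have h: "bv (r,c) i j = sqrt 2 / 2"
            by (simp only: bv_off[OF False] if_P[OF t2] if_not_P[OF f1], simp?)
          show ?thesis by (simp only: h ss if_P[OF t2] if_not_P[OF f1], simp?)
        next
          case f2: False
          have h: "bv (r,c) i j = 0"
            by (simp only: bv_off[OF False] if_not_P[OF f2] if_not_P[OF f1], simp?)
          show ?thesis by (simp only: h if_not_P[OF f2] if_not_P[OF f1], simp?)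
        qed
      qed
      have "(\<Sum>i<n. \<Sum>j<n. bv (r,c) i j * bv (r,c) i j) =
          (\<Sum>i<n. \<Sum>j<n. (if i = r \<and> j = c then 1/2 else 0) + (if i = c \<and> j = r then 1/2 else 0))"
        by (simp only: pw)
      also have "\<dots> = (\<Sum>i<n. \<Sum>j<n. if i = r \<and> j = c then 1/2 else 0) + (\<Sum>i<n. \<Sum>j<n. if i = c \<and> j = r then 1/2 else 0)"
        by (simp only: sum.distrib)
      also have "\<dots> = 1" using rc sum2_delta[of r n c "\<lambda>i j. 1/2"] sum2_delta[of c n r "\<lambda>i j. 1/2"] by simp
      finally show ?thesis .
    qed
    then show ?thesis using True sp by simp
  qed
  finally show ?thesis .
qed

lemma sym_basis_sym: "i < n \<Longrightarrow> j < n \<Longrightarrow> sym_basis n l $$ (i,j) = sym_basis n l $$ (j,i)"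
  by (simp add: sym_basis_bv bv_sym[of _ i j])

lemma transpose_sym_basis: "transpose_mat (sym_basis n l) = sym_basis n l"
  using sym_basis_carrier[of n l] by (intro eq_matI) (auto simp: sym_basis_sym)

lemma sip_add: "A \<in> carrier_mat n n \<Longrightarrow> B \<in> carrier_mat n n \<Longrightarrow> sip n l (A + B) = sip n l A + sip n l B"
  unfolding sip_def by (simp add: distrib_left sum.distrib)

lemma sip_smult: "A \<in> carrier_mat n n \<Longrightarrow> sip n l (c \<cdot>\<^sub>m A) = c * sip n l A"
  unfolding sip_def by (simp add: sum_distrib_left mult_ac)

lemma sip_transpose: 
  assumes "Z \<in> carrier_mat n n"
  shows "sip n l (transpose_mat Z) = sip n l Z"
proof -
  have "sip n l (transpose_mat Z) = (\<Sum>i<n. \<Sum>j<n. sym_basis n l $$ (i,j) * Z $$ (j,i))"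
    unfolding sip_def using assms by (intro sum.cong refl) simp
  also have "\<dots> = (\<Sum>j<n. \<Sum>i<n. sym_basis n l $$ (i,j) * Z $$ (j,i))"
    by (rule sum.swap)
  also have "\<dots> = (\<Sum>j<n. \<Sum>i<n. sym_basis n l $$ (j,i) * Z $$ (j,i))"
    by (intro sum.cong refl) (simp add: sym_basis_sym)
  finally show ?thesis unfolding sip_def .
qed

lemma delta2:
  assumes "r < (n::nat)" "c < n"
  shows "(\<Sum>i<n. \<Sum>j<n. (if r = i \<and> c = j then 1 else 0) * g i j) = (g r c :: real)"
proof -
  have "(if r = i \<and> c = j then 1 else 0) * g i j = (if i = r \<and> j = c then g i j else 0)" for i j
    by (cases "r = i \<and> c = j") auto
  then show ?thesis using sum2_delta[OF assms, of g] by simp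
qed

lemma completeness:
  assumes "a < n" "b < n" "Z \<in> carrier_mat n n"
  shows "(\<Sum>l<tri n. sym_basis n l $$ (a,b) * sip n l Z) = (Z $$ (a,b) + Z $$ (b,a)) / 2"
proof -
  have "(\<Sum>l<tri n. sym_basis n l $$ (a,b) * sip n l Z) =
        (\<Sum>l<tri n. \<Sum>i<n. \<Sum>j<n. sym_basis n l $$ (a,b) * sym_basis n l $$ (i,j) * Z $$ (i,j))"
    unfolding sip_def by (simp add: sum_distrib_left mult.assoc)
  also have "\<dots> = (\<Sum>i<n. \<Sum>j<n. \<Sum>l<tri n. sym_basis n l $$ (a,b) * sym_basis n l $$ (i,j) * Z $$ (i,j))"
    by (simp only: sum.swap[of _ "{..<tri n}"])
  also have "\<dots> = (\<Sum>i<n. \<Sum>j<n. (\<Sum>l<tri n. sym_basis n l $$ (a,b) * sym_basis n l $$ (i,j)) * Z $$ (i,j))"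
    by (simp only: sum_distrib_right)
  also have "\<dots> = (\<Sum>i<n. \<Sum>j<n. ((if a = i \<and> b = j then 1 else 0) + (if a = j \<and> b = i then 1 else 0)) / 2 * Z $$ (i,j))"
    using assms by (intro sum.cong refl) (simp add: K1)
  also have "\<dots> = (\<Sum>i<n. \<Sum>j<n. (if a = i \<and> b = j then 1 else 0) * (Z $$ (i,j) / 2)) +
                  (\<Sum>i<n. \<Sum>j<n. (if b = i \<and> a = j then 1 else 0) * (Z $$ (i,j) / 2))"
  proof -
    have pw: "((if a = i \<and> b = j then 1 else 0) + (if a = j \<and> b = i then 1 else 0)) / 2 * Z $$ (i,j) =
      (if a = i \<and> b = j then 1 else 0) * (Z $$ (i,j) / 2) + (if b = i \<and> a = j then 1 else (0::real)) * (Z $$ (i,j) / 2)" for i j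
    proof -
      have "(if a = j \<and> b = i then 1 else (0::real)) = (if b = i \<and> a = j then 1 else 0)" by (simp only: conj_commute)
      then show ?thesis by (simp only: add_divide_distrib distrib_right, simp?)
    qed
    show ?thesis by (simp only: pw sum.distrib)
  qed
  also have "\<dots> = (Z $$ (a,b) + Z $$ (b,a)) / 2"
    unfolding delta2[OF assms(1,2), of "\<lambda>i j. Z $$ (i,j) / 2"] delta2[OF assms(2,1), of "\<lambda>i j. Z $$ (i,j) / 2"]
    by (simp only: add_divide_distrib)
  finally show ?thesis .
qed

lemma Wmat_carrier: "Wmat n \<in> carrier_mat (tri n) (n * n)"
  unfolding Wmat_def using mat_of_rows_carrier(1)[of "n*n" "map (\<lambda>l. vecm (sym_basis n l)) [0..<tri n]"] by simp

lemma Wmat_entry: "l < tri n \<Longrightarrow> p < n * n \<Longrightarrow> Wmat n $$ (l,p) = sym_basis n l $$ (p mod n, p div n)"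
  unfolding Wmat_def using sym_basis_carrier[of n l]
  by (simp add: mat_of_rows_index vecm_def)

lemma kron_carrier: "X \<in> carrier_mat n n \<Longrightarrow> Y \<in> carrier_mat n n \<Longrightarrow> kron X Y \<in> carrier_mat (n*n) (n*n)"
  unfolding kron_def by simp

lemma kron_entry: "X \<in> carrier_mat n n \<Longrightarrow> Y \<in> carrier_mat n n \<Longrightarrow> p < n*n \<Longrightarrow> q < n*n \<Longrightarrow>
   kron X Y $$ (p,q) = X $$ (p div n, q div n) * Y $$ (p mod n, q mod n)"
  unfolding kron_def by simp

lemma skron_carrier: "X \<in> carrier_mat n n \<Longrightarrow> Y \<in> carrier_mat n n \<Longrightarrow> skron X Y \<in> carrier_mat (tri n) (tri n)"
proof -
  assume X: "X \<in> carrier_mat n n" and Y: "Y \<in> carrier_mat n n"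
  have "Wmat n * kron X Y \<in> carrier_mat (tri n) (n*n)"
    using Wmat_carrier kron_carrier[OF X Y] by (rule mult_carrier_mat)
  moreover have "transpose_mat (Wmat n) \<in> carrier_mat (n*n) (tri n)" using Wmat_carrier by simp
  ultimately have "Wmat n * kron X Y * transpose_mat (Wmat n) \<in> carrier_mat (tri n) (tri n)"
    by (rule mult_carrier_mat)
  then show ?thesis unfolding skron_def using X by simp
qed

lemma skron_entry:
  assumes X: "X \<in> carrier_mat n n" and Y: "Y \<in> carrier_mat n n" and l: "l < tri n" and l': "l' < tri n"
  shows "skron X Y $$ (l,l') = sip n l (Y * sym_basis n l' * transpose_mat X)"
proof -
  let ?W = "Wmat n" and ?K = "kron X Y" and ?e = "sym_basis n l" and ?e' = "sym_basis n l'"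
  have W: "?W \<in> carrier_mat (tri n) (n*n)" by (rule Wmat_carrier)
  have K: "?K \<in> carrier_mat (n*n) (n*n)" using X Y by (rule kron_carrier)
  have "skron X Y $$ (l,l') = (?W * ?K * transpose_mat ?W) $$ (l,l')"
    unfolding skron_def using X by simp
  also have "\<dots> = (\<Sum>q<n*n. (?W * ?K) $$ (l,q) * transpose_mat ?W $$ (q,l'))"
    using W K l l' by (intro mult_entry[of _ "tri n" "n*n"]) auto
  also have "\<dots> = (\<Sum>q<n*n. (\<Sum>p<n*n. ?W $$ (l,p) * ?K $$ (p,q)) * ?W $$ (l',q))"
    using W K l l' by (intro sum.cong refl) (subst mult_entry[of ?W "tri n" "n*n" ?K "n*n"], auto)
  also have "\<dots> = (\<Sum>q<n*n. (\<Sum>p<n*n. ?e $$ (p mod n, p div n) * (X $$ (p div n, q div n) * Y $$ (p mod n, q mod n)))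
                      * ?e' $$ (q mod n, q div n))"
    using l l' X Y by (intro sum.cong refl) (simp add: Wmat_entry kron_entry)
  also have "\<dots> = (\<Sum>q<n*n. (\<Sum>j<n. \<Sum>i<n. ?e $$ (i,j) * (X $$ (j, q div n) * Y $$ (i, q mod n)))
                      * ?e' $$ (q mod n, q div n))"
  proof (rule sum.cong[OF refl])
    fix q
    show "(\<Sum>p<n*n. ?e $$ (p mod n, p div n) * (X $$ (p div n, q div n) * Y $$ (p mod n, q mod n))) * ?e' $$ (q mod n, q div n) =
          (\<Sum>j<n. \<Sum>i<n. ?e $$ (i,j) * (X $$ (j, q div n) * Y $$ (i, q mod n))) * ?e' $$ (q mod n, q div n)"
      using sum_sq_index[of "\<lambda>i j. ?e $$ (i,j) * (X $$ (j, q div n) * Y $$ (i, q mod n))" n] by simp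
  qed
  also have "\<dots> = (\<Sum>j'<n. \<Sum>i'<n. (\<Sum>j<n. \<Sum>i<n. ?e $$ (i,j) * (X $$ (j, j') * Y $$ (i, i'))) * ?e' $$ (i', j'))"
    using sum_sq_index[of "\<lambda>i' j'. (\<Sum>j<n. \<Sum>i<n. ?e $$ (i,j) * (X $$ (j, j') * Y $$ (i, i'))) * ?e' $$ (i', j')" n]
    by simp
  also have "\<dots> = (\<Sum>j'<n. \<Sum>i'<n. \<Sum>j<n. \<Sum>i<n. ?e $$ (i,j) * Y $$ (i,i') * ?e' $$ (i',j') * transpose_mat X $$ (j',j))"
    using X by (intro sum.cong refl) (simp add: sum_distrib_right sum_distrib_left mult_ac)
  also have "\<dots> = (\<Sum>i<n. \<Sum>j<n. \<Sum>j'<n. \<Sum>i'<n. ?e $$ (i,j) * Y $$ (i,i') * ?e' $$ (i',j') * transpose_mat X $$ (j',j))"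
    by (rule sum4_perm[symmetric])
  also have "\<dots> = sip n l (Y * ?e' * transpose_mat X)"
    using X Y sym_basis_carrier[of n l'] by (subst ip_triple) auto
  finally show ?thesis .
qed

lemma sum_pull: "(\<Sum>l\<in>L. a * b * e l * c * s l) = a * b * c * (\<Sum>l\<in>L. e l * s l :: real)"
  by (simp add: sum_distrib_left mult_ac)

lemma swap_last: "a * b * c * d = a * b * d * (c :: real)"
  by (simp add: mult_ac)

lemma key:
  assumes P: "P \<in> carrier_mat n n" and Q: "Q \<in> carrier_mat n n" and Z: "Z \<in> carrier_mat n n"
  shows "(\<Sum>l'<tri n. sip n l (P * sym_basis n l' * Q) * sip n l' Z) =
         sip n l (P * ((1/2) \<cdot>\<^sub>m (Z + transpose_mat Z)) * Q)"
proof -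
  have "(\<Sum>l'<tri n. sip n l (P * sym_basis n l' * Q) * sip n l' Z) =
     (\<Sum>l'<tri n. (\<Sum>i<n. \<Sum>j<n. \<Sum>j'<n. \<Sum>i'<n.
      sym_basis n l $$ (i,j) * P $$ (i,i') * sym_basis n l' $$ (i',j') * Q $$ (j',j)) * sip n l' Z)"
    using P Q sym_basis_carrier by (simp add: ip_triple)
  also have "\<dots> = (\<Sum>l'<tri n. \<Sum>i<n. \<Sum>j<n. \<Sum>j'<n. \<Sum>i'<n.
      sym_basis n l $$ (i,j) * P $$ (i,i') * sym_basis n l' $$ (i',j') * Q $$ (j',j) * sip n l' Z)"
    by (simp only: sum_distrib_right)
  also have "\<dots> = (\<Sum>i<n. \<Sum>j<n. \<Sum>j'<n. \<Sum>i'<n. \<Sum>l'<tri n.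
      sym_basis n l $$ (i,j) * P $$ (i,i') * sym_basis n l' $$ (i',j') * Q $$ (j',j) * sip n l' Z)"
    by (simp only: sum.swap[of _ "{..<tri n}"])
  also have "\<dots> = (\<Sum>i<n. \<Sum>j<n. \<Sum>j'<n. \<Sum>i'<n.
      sym_basis n l $$ (i,j) * P $$ (i,i') * Q $$ (j',j) * (\<Sum>l'<tri n. sym_basis n l' $$ (i',j') * sip n l' Z))"
    by (simp only: sum_pull)
  also have "\<dots> = (\<Sum>i<n. \<Sum>j<n. \<Sum>j'<n. \<Sum>i'<n.
      sym_basis n l $$ (i,j) * P $$ (i,i') * ((1/2) \<cdot>\<^sub>m (Z + transpose_mat Z)) $$ (i',j') * Q $$ (j',j))"
  proof (intro sum.cong refl)
    fix i j j' i' assume "i' \<in> {..<n}" "j' \<in> {..<n}"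
    then have hc: "(\<Sum>l'<tri n. sym_basis n l' $$ (i',j') * sip n l' Z) = ((1/2) \<cdot>\<^sub>m (Z + transpose_mat Z)) $$ (i',j')"
      using Z by (simp add: completeness)
    show "sym_basis n l $$ (i,j) * P $$ (i,i') * Q $$ (j',j) * (\<Sum>l'<tri n. sym_basis n l' $$ (i',j') * sip n l' Z) =
      sym_basis n l $$ (i,j) * P $$ (i,i') * ((1/2) \<cdot>\<^sub>m (Z + transpose_mat Z)) $$ (i',j') * Q $$ (j',j)"
      unfolding hc by (rule swap_last)
  qed
  also have "\<dots> = sip n l (P * ((1/2) \<cdot>\<^sub>m (Z + transpose_mat Z)) * Q)"
    using P Q Z by (subst ip_triple) auto
  finally show ?thesis .
qed

lemma binom_step:
  fixes g :: "nat \<Rightarrow> nat \<Rightarrow> real"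
  shows "(\<Sum>i\<le>Suc k. real (Suc k choose i) * g i (Suc k - i)) =
         (\<Sum>i\<le>k. real (k choose i) * (g (Suc i) (k - i) + g i (Suc k - i)))"
proof -
  have h: "g 0 (Suc k) + (\<Sum>i\<le>k. real (k choose Suc i) * g (Suc i) (k - i)) =
             (\<Sum>i\<le>k. real (k choose i) * g i (Suc k - i))"
  proof -
    have "g 0 (Suc k) + (\<Sum>i\<le>k. real (k choose Suc i) * g (Suc i) (k - i)) =
             (\<Sum>i\<le>Suc k. real (k choose i) * g i (Suc k - i))"
      by (subst sum.atMost_Suc_shift) simp
    also have "\<dots> = (\<Sum>i\<le>k. real (k choose i) * g i (Suc k - i))"
      by (subst sum.atMost_Suc) simp
    finally show ?thesis .
  qed
  have "(\<Sum>i\<le>Suc k. real (Suc k choose i) * g i (Suc k - i)) =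
        g 0 (Suc k) + (\<Sum>i\<le>k. real (Suc k choose Suc i) * g (Suc i) (k - i))"
    by (subst sum.atMost_Suc_shift) simp
  also have "\<dots> = (\<Sum>i\<le>k. real (k choose i) * g (Suc i) (k - i))
                   + (g 0 (Suc k) + (\<Sum>i\<le>k. real (k choose Suc i) * g (Suc i) (k - i)))"
    by (simp add: sum.distrib distrib_right)
  also have "\<dots> = (\<Sum>i\<le>k. real (k choose i) * g (Suc i) (k - i)) + (\<Sum>i\<le>k. real (k choose i) * g i (Suc k - i))"
    by (simp only: h)
  finally show ?thesis by (simp add: sum.distrib distrib_left)
qed

lemma sum_rearr:
  "(\<Sum>l\<in>L. (c * (\<Sum>i\<in>I. a i * G i l)) * H l) = c * (\<Sum>i\<in>I. a i * (\<Sum>l\<in>L. G i l * H l :: real))"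
proof -
  have "(\<Sum>l\<in>L. (c * (\<Sum>i\<in>I. a i * G i l)) * H l) = (\<Sum>l\<in>L. \<Sum>i\<in>I. c * (a i * (G i l * H l)))"
    by (simp add: sum_distrib_left sum_distrib_right mult_ac)
  also have "\<dots> = (\<Sum>i\<in>I. \<Sum>l\<in>L. c * (a i * (G i l * H l)))"
    by (rule sum.swap)
  also have "\<dots> = c * (\<Sum>i\<in>I. a i * (\<Sum>l\<in>L. G i l * H l))"
    by (simp add: sum_distrib_left)
  finally show ?thesis .
qed

context
  fixes n :: nat and A :: "real mat"
  assumes A: "A \<in> carrier_mat n n"
begin

lemma skron_comm_I: "skron A (1\<^sub>m n) = skron (1\<^sub>m n) A"
proof (rule eq_matI)
  show "dim_row (skron A (1\<^sub>m n)) = dim_row (skron (1\<^sub>m n) A)"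
    using skron_carrier[OF A one_carrier_mat] skron_carrier[OF one_carrier_mat A] by simp
  show "dim_col (skron A (1\<^sub>m n)) = dim_col (skron (1\<^sub>m n) A)"
    using skron_carrier[OF A one_carrier_mat] skron_carrier[OF one_carrier_mat A] by simp
  fix l l' assume "l < dim_row (skron (1\<^sub>m n) A)" "l' < dim_col (skron (1\<^sub>m n) A)"
  then have l: "l < tri n" "l' < tri n" using skron_carrier[OF one_carrier_mat A] by auto
  have E: "sym_basis n l' \<in> carrier_mat n n" by (rule sym_basis_carrier)
  have "skron A (1\<^sub>m n) $$ (l,l') = sip n l (sym_basis n l' * transpose_mat A)"
    using skron_entry[OF A one_carrier_mat l] E by simp
  also have "\<dots> = sip n l (transpose_mat (sym_basis n l' * transpose_mat A))"
    using E A by (intro sip_transpose[symmetric]) simp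
  also have "transpose_mat (sym_basis n l' * transpose_mat A) = A * sym_basis n l'"
    using E A by (simp add: transpose_mult[OF E] transpose_sym_basis)
  also have "sip n l (A * sym_basis n l') = skron (1\<^sub>m n) A $$ (l,l')"
    using skron_entry[OF one_carrier_mat A l] E A by simp
  finally show "skron A (1\<^sub>m n) $$ (l,l') = skron (1\<^sub>m n) A $$ (l,l')" .
qed

abbreviation "S \<equiv> skron (1\<^sub>m n) A"

lemma S_carrier: "S \<in> carrier_mat (tri n) (tri n)"
  by (rule skron_carrier[OF one_carrier_mat A])

lemma S_entry: "l < tri n \<Longrightarrow> l' < tri n \<Longrightarrow> S $$ (l,l') = sip n l (A * sym_basis n l')"
  using skron_entry[OF one_carrier_mat A] sym_basis_carrier[of n l'] A by simp

lemma step_id: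
  assumes E: "E \<in> carrier_mat n n" and Et: "transpose_mat E = E"
  shows "sip n l (A ^\<^sub>m i * ((1/2) \<cdot>\<^sub>m (A * E + transpose_mat (A * E))) * transpose_mat (A ^\<^sub>m j)) =
    (1/2) * (sip n l (A ^\<^sub>m Suc i * E * transpose_mat (A ^\<^sub>m j)) + sip n l (A ^\<^sub>m i * E * transpose_mat (A ^\<^sub>m Suc j)))"
proof -
  have Ai: "A ^\<^sub>m i \<in> carrier_mat n n" and Aj: "A ^\<^sub>m j \<in> carrier_mat n n" using A by auto
  have Qj: "transpose_mat (A ^\<^sub>m j) \<in> carrier_mat n n" using Aj by simp
  have At: "transpose_mat A \<in> carrier_mat n n" using A by simp
  have X: "A * E \<in> carrier_mat n n" using A E by simp
  have Y: "E * transpose_mat A \<in> carrier_mat n n" using At E by simp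
  have tr: "transpose_mat (A * E) = E * transpose_mat A"
    using transpose_mult[OF A E] Et by simp
  have "A ^\<^sub>m i * ((1/2) \<cdot>\<^sub>m (A * E + E * transpose_mat A)) * transpose_mat (A ^\<^sub>m j) =
        (1/2) \<cdot>\<^sub>m (A ^\<^sub>m i * (A * E) * transpose_mat (A ^\<^sub>m j) + A ^\<^sub>m i * (E * transpose_mat A) * transpose_mat (A ^\<^sub>m j))"
  proof -
    have "A ^\<^sub>m i * ((1/2) \<cdot>\<^sub>m (A * E + E * transpose_mat A)) = (1/2) \<cdot>\<^sub>m (A ^\<^sub>m i * (A * E + E * transpose_mat A))"
      using mult_smult_distrib[OF Ai add_carrier_mat[OF Y]] by simp
    also have "A ^\<^sub>m i * (A * E + E * transpose_mat A) = A ^\<^sub>m i * (A * E) + A ^\<^sub>m i * (E * transpose_mat A)"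
      by (rule mult_add_distrib_mat[OF Ai X Y])
    finally have 1: "A ^\<^sub>m i * ((1/2) \<cdot>\<^sub>m (A * E + E * transpose_mat A)) =
       (1/2) \<cdot>\<^sub>m (A ^\<^sub>m i * (A * E) + A ^\<^sub>m i * (E * transpose_mat A))" .
    have U: "A ^\<^sub>m i * (A * E) \<in> carrier_mat n n" using Ai X by simp
    have V: "A ^\<^sub>m i * (E * transpose_mat A) \<in> carrier_mat n n" using Ai Y by simp
    show ?thesis unfolding 1
      using mult_smult_assoc_mat[of "A ^\<^sub>m i * (A * E) + A ^\<^sub>m i * (E * transpose_mat A)" n n "transpose_mat (A ^\<^sub>m j)" n "1/2"]
        add_mult_distrib_mat[OF U V Qj] U V Qj by simp
  qed
  moreover have "A ^\<^sub>m i * (A * E) * transpose_mat (A ^\<^sub>m j) = A ^\<^sub>m Suc i * E * transpose_mat (A ^\<^sub>m j)"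
    using Ai A E by (simp add: assoc_mult_mat[OF Ai A E])
  moreover have "A ^\<^sub>m i * (E * transpose_mat A) * transpose_mat (A ^\<^sub>m j) = A ^\<^sub>m i * E * transpose_mat (A ^\<^sub>m Suc j)"
  proof -
    have "transpose_mat (A ^\<^sub>m Suc j) = transpose_mat A * transpose_mat (A ^\<^sub>m j)"
      using transpose_mult[OF Aj A] by simp
    moreover have "A ^\<^sub>m i * (E * transpose_mat A) * transpose_mat (A ^\<^sub>m j) = A ^\<^sub>m i * ((E * transpose_mat A) * transpose_mat (A ^\<^sub>m j))"
      by (rule assoc_mult_mat[OF Ai Y Qj])
    moreover have "(E * transpose_mat A) * transpose_mat (A ^\<^sub>m j) = E * (transpose_mat A * transpose_mat (A ^\<^sub>m j))"
      by (rule assoc_mult_mat[OF E At Qj])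
    moreover have "A ^\<^sub>m i * E * (transpose_mat A * transpose_mat (A ^\<^sub>m j)) = A ^\<^sub>m i * (E * (transpose_mat A * transpose_mat (A ^\<^sub>m j)))"
      by (rule assoc_mult_mat[OF Ai E mult_carrier_mat[OF At Qj]])
    ultimately show ?thesis by simp
  qed
  ultimately have "A ^\<^sub>m i * ((1/2) \<cdot>\<^sub>m (A * E + E * transpose_mat A)) * transpose_mat (A ^\<^sub>m j) =
        (1/2) \<cdot>\<^sub>m (A ^\<^sub>m Suc i * E * transpose_mat (A ^\<^sub>m j) + A ^\<^sub>m i * E * transpose_mat (A ^\<^sub>m Suc j))"
    by simp
  moreover have "A ^\<^sub>m Suc i * E * transpose_mat (A ^\<^sub>m j) \<in> carrier_mat n n"
    using mult_carrier_mat[OF mult_carrier_mat[OF pow_carrier_mat[OF A] E] Qj] .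
  moreover have "A ^\<^sub>m i * E * transpose_mat (A ^\<^sub>m Suc j) \<in> carrier_mat n n"
  proof -
    have "transpose_mat (A ^\<^sub>m Suc j) \<in> carrier_mat n n"
      by (simp only: transpose_carrier_mat) (rule pow_carrier_mat[OF A])
    then show ?thesis using mult_carrier_mat[OF mult_carrier_mat[OF Ai E]] by blast
  qed
  ultimately show ?thesis unfolding tr by (simp add: sip_smult sip_add)
qed

lemma S_pow_entry:
  "l < tri n \<Longrightarrow> l' < tri n \<Longrightarrow> (S ^\<^sub>m k) $$ (l,l') =
     (1 / 2 ^ k) * (\<Sum>i\<in>{0..k}. real (k choose i) * sip n l (A ^\<^sub>m i * sym_basis n l' * transpose_mat (A ^\<^sub>m (k - i))))"
proof (induction k arbitrary: l')
  case 0
  have "S ^\<^sub>m 0 = 1\<^sub>m (tri n)" using S_carrier by simp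
  then show ?case using 0 A sym_basis_carrier[of n l'] by (simp add: ortho)
next
  case (Suc k)
  let ?E = "sym_basis n l'"
  have E: "?E \<in> carrier_mat n n" by (rule sym_basis_carrier)
  let ?G = "\<lambda>i l2. sip n l (A ^\<^sub>m i * sym_basis n l2 * transpose_mat (A ^\<^sub>m (k - i)))"
  let ?g = "\<lambda>p q. sip n l (A ^\<^sub>m p * ?E * transpose_mat (A ^\<^sub>m q))"
  have "(S ^\<^sub>m Suc k) $$ (l,l') = (S ^\<^sub>m k * S) $$ (l,l')" by simp
  also have "\<dots> = (\<Sum>l2<tri n. (S ^\<^sub>m k) $$ (l,l2) * S $$ (l2,l'))"
    using S_carrier Suc.prems by (intro mult_entry[of _ "tri n" "tri n"]) auto
  also have "\<dots> = (\<Sum>l2<tri n. ((1 / 2 ^ k) * (\<Sum>i\<in>{0..k}. real (k choose i) * ?G i l2)) * sip n l2 (A * ?E))"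
    using Suc by (intro sum.cong refl) (simp add: S_entry)
  also have "\<dots> = (1 / 2 ^ k) * (\<Sum>i\<in>{0..k}. real (k choose i) * (\<Sum>l2<tri n. ?G i l2 * sip n l2 (A * ?E)))"
    by (rule sum_rearr)
  also have "\<dots> = (1 / 2 ^ k) * (\<Sum>i\<in>{0..k}. real (k choose i) *
       sip n l (A ^\<^sub>m i * ((1/2) \<cdot>\<^sub>m (A * ?E + transpose_mat (A * ?E))) * transpose_mat (A ^\<^sub>m (k - i))))"
    using A E by (intro arg_cong[where f = "\<lambda>x. (1 / 2 ^ k) * x"] sum.cong refl) (simp add: key)
  also have "\<dots> = (1 / 2 ^ k) * (\<Sum>i\<in>{0..k}. real (k choose i) * ((1/2) * (?g (Suc i) (k - i) + ?g i (Suc k - i))))"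
    using E by (intro arg_cong[where f = "\<lambda>x. (1 / 2 ^ k) * x"] sum.cong refl)
      (simp add: step_id transpose_sym_basis Suc_diff_le)
  also have "\<dots> = (1 / 2 ^ Suc k) * (\<Sum>i\<le>k. real (k choose i) * (?g (Suc i) (k - i) + ?g i (Suc k - i)))"
    by (simp add: atLeast0AtMost sum_distrib_left mult_ac)
  also have "\<dots> = (1 / 2 ^ Suc k) * (\<Sum>i\<le>Suc k. real (Suc k choose i) * ?g i (Suc k - i))"
    using binom_step[where g = ?g and k = k] by simp
  finally show ?case by (simp add: atLeast0AtMost)
qed

end

lemma pow_smult:
  fixes M :: "real mat"
  assumes M: "M \<in> carrier_mat m m"
  shows "(c \<cdot>\<^sub>m M) ^\<^sub>m k = c ^ k \<cdot>\<^sub>m (M ^\<^sub>m k)"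
proof (induction k)
  case 0
  show ?case using M by (intro eq_matI) auto
next
  case (Suc k)
  have Mk: "M ^\<^sub>m k \<in> carrier_mat m m" using M by simp
  have cM: "c \<cdot>\<^sub>m M \<in> carrier_mat m m" using M by simp
  have "(c \<cdot>\<^sub>m M) ^\<^sub>m Suc k = (c ^ k \<cdot>\<^sub>m (M ^\<^sub>m k)) * (c \<cdot>\<^sub>m M)" using Suc by simp
  also have "\<dots> = c ^ k \<cdot>\<^sub>m ((M ^\<^sub>m k) * (c \<cdot>\<^sub>m M))" by (rule mult_smult_assoc_mat[OF Mk cM])
  also have "(M ^\<^sub>m k) * (c \<cdot>\<^sub>m M) = c \<cdot>\<^sub>m (M ^\<^sub>m k * M)" by (rule mult_smult_distrib[OF Mk M])
  also have "c ^ k \<cdot>\<^sub>m (c \<cdot>\<^sub>m (M ^\<^sub>m k * M)) = c ^ Suc k \<cdot>\<^sub>m (M ^\<^sub>m Suc k)"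
    using Mk M by (intro eq_matI) auto
  finally show ?case .
qed

lemma msum_entry: "i < d \<Longrightarrow> j < d \<Longrightarrow> msum d f T $$ (i,j) = (\<Sum>x\<in>T. f x $$ (i,j))"
  unfolding msum_def by simp

lemma msum_carrier: "msum d f T \<in> carrier_mat d d"
  unfolding msum_def by simp

lemma msum_dim[simp]: "dim_row (msum d f T) = d" "dim_col (msum d f T) = d"
  unfolding msum_def by simp_all

lemma part_a:
  assumes A: "A \<in> carrier_mat n n"
  shows "(skron A (1\<^sub>m n)) ^\<^sub>m k = (skron (1\<^sub>m n) A) ^\<^sub>m k \<and>
            (skron (1\<^sub>m n) A) ^\<^sub>m k =
              (1 / 2 ^ k) \<cdot>\<^sub>m msum (tri n)
                 (\<lambda>i. real (k choose i) \<cdot>\<^sub>m skron (A ^\<^sub>m (k - i)) (A ^\<^sub>m i)) {0..k}"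
proof
  show "(skron A (1\<^sub>m n)) ^\<^sub>m k = (skron (1\<^sub>m n) A) ^\<^sub>m k" using skron_comm_I[OF A] by simp
  show "(skron (1\<^sub>m n) A) ^\<^sub>m k =
              (1 / 2 ^ k) \<cdot>\<^sub>m msum (tri n)
                 (\<lambda>i. real (k choose i) \<cdot>\<^sub>m skron (A ^\<^sub>m (k - i)) (A ^\<^sub>m i)) {0..k}"
  proof (rule eq_matI)
    have Sk: "(skron (1\<^sub>m n) A) ^\<^sub>m k \<in> carrier_mat (tri n) (tri n)" using S_carrier[OF A] by simp
    show "dim_row ((skron (1\<^sub>m n) A) ^\<^sub>m k) = dim_row ((1 / 2 ^ k) \<cdot>\<^sub>m msum (tri n)
                 (\<lambda>i. real (k choose i) \<cdot>\<^sub>m skron (A ^\<^sub>m (k - i)) (A ^\<^sub>m i)) {0..k})"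
      using carrier_matD[OF Sk] by simp
    show "dim_col ((skron (1\<^sub>m n) A) ^\<^sub>m k) = dim_col ((1 / 2 ^ k) \<cdot>\<^sub>m msum (tri n)
                 (\<lambda>i. real (k choose i) \<cdot>\<^sub>m skron (A ^\<^sub>m (k - i)) (A ^\<^sub>m i)) {0..k})"
      using carrier_matD[OF Sk] by simp
    fix l l' assume "l < dim_row ((1 / 2 ^ k) \<cdot>\<^sub>m msum (tri n)
                 (\<lambda>i. real (k choose i) \<cdot>\<^sub>m skron (A ^\<^sub>m (k - i)) (A ^\<^sub>m i)) {0..k})"
       "l' < dim_col ((1 / 2 ^ k) \<cdot>\<^sub>m msum (tri n)
                 (\<lambda>i. real (k choose i) \<cdot>\<^sub>m skron (A ^\<^sub>m (k - i)) (A ^\<^sub>m i)) {0..k})"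
    then have l: "l < tri n" "l' < tri n" by auto
    have "((1 / 2 ^ k) \<cdot>\<^sub>m msum (tri n)
                 (\<lambda>i. real (k choose i) \<cdot>\<^sub>m skron (A ^\<^sub>m (k - i)) (A ^\<^sub>m i)) {0..k}) $$ (l,l')
       = (1 / 2 ^ k) * (\<Sum>i\<in>{0..k}. (real (k choose i) \<cdot>\<^sub>m skron (A ^\<^sub>m (k - i)) (A ^\<^sub>m i)) $$ (l,l'))"
      using l by (simp add: msum_entry)
    also have "\<dots> = (1 / 2 ^ k) * (\<Sum>i\<in>{0..k}. real (k choose i) * sip n l (A ^\<^sub>m i * sym_basis n l' * transpose_mat (A ^\<^sub>m (k - i))))"
    proof (intro arg_cong[where f = "\<lambda>x. (1 / 2 ^ k) * x"] sum.cong refl)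
      fix i
      have c: "skron (A ^\<^sub>m (k - i)) (A ^\<^sub>m i) \<in> carrier_mat (tri n) (tri n)"
        using A by (intro skron_carrier) auto
      show "(real (k choose i) \<cdot>\<^sub>m skron (A ^\<^sub>m (k - i)) (A ^\<^sub>m i)) $$ (l,l') =
            real (k choose i) * sip n l (A ^\<^sub>m i * sym_basis n l' * transpose_mat (A ^\<^sub>m (k - i)))"
        using c l A by (simp add: skron_entry)
    qed
    also have "\<dots> = ((skron (1\<^sub>m n) A) ^\<^sub>m k) $$ (l,l')"
      using S_pow_entry[OF A l] by simp
    finally show "((skron (1\<^sub>m n) A) ^\<^sub>m k) $$ (l,l') = ((1 / 2 ^ k) \<cdot>\<^sub>m msum (tri n)
                 (\<lambda>i. real (k choose i) \<cdot>\<^sub>m skron (A ^\<^sub>m (k - i)) (A ^\<^sub>m i)) {0..k}) $$ (l,l')" by simp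
  qed
qed

lemma pow_bound:
  fixes A :: "real mat"
  assumes A: "A \<in> carrier_mat n n" and a: "a < n"
  shows "c < n \<Longrightarrow> \<bar>(A ^\<^sub>m k) $$ (a,c)\<bar> \<le> (\<Sum>i<n. \<Sum>j<n. \<bar>A $$ (i,j)\<bar>) ^ k"
proof (induction k arbitrary: c)
  case 0
  then show ?case using A a by simp
next
  case (Suc k)
  let ?M = "\<Sum>i<n. \<Sum>j<n. \<bar>A $$ (i,j)\<bar>"
  have M0: "0 \<le> ?M" by (simp add: sum_nonneg)
  have "(A ^\<^sub>m Suc k) $$ (a,c) = (A ^\<^sub>m k * A) $$ (a,c)" by simp
  also have "\<dots> = (\<Sum>m<n. (A ^\<^sub>m k) $$ (a,m) * A $$ (m,c))"
    using A a Suc.prems by (intro mult_entry[of _ n n]) auto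
  finally have "\<bar>(A ^\<^sub>m Suc k) $$ (a,c)\<bar> \<le> (\<Sum>m<n. \<bar>(A ^\<^sub>m k) $$ (a,m)\<bar> * \<bar>A $$ (m,c)\<bar>)"
    by (simp add: sum_abs[THEN order_trans] abs_mult)
  also have "\<dots> \<le> (\<Sum>m<n. ?M ^ k * \<bar>A $$ (m,c)\<bar>)"
    using Suc.IH by (intro sum_mono mult_right_mono) auto
  also have "\<dots> = ?M ^ k * (\<Sum>m<n. \<bar>A $$ (m,c)\<bar>)" by (simp add: sum_distrib_left)
  also have "(\<Sum>m<n. \<bar>A $$ (m,c)\<bar>) \<le> ?M"
  proof (rule sum_mono)
    fix m assume "m \<in> {..<n}"
    show "\<bar>A $$ (m,c)\<bar> \<le> (\<Sum>j<n. \<bar>A $$ (m,j)\<bar>)"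
      using Suc.prems by (intro member_le_sum[of c "{..<n}" "\<lambda>j. \<bar>A $$ (m,j)\<bar>"]) auto
  qed
  then have "?M ^ k * (\<Sum>m<n. \<bar>A $$ (m,c)\<bar>) \<le> ?M ^ k * ?M"
    using M0 by (intro mult_left_mono) auto
  finally show ?case by (simp add: mult.commute)
qed

lemma summable_alpha:
  fixes A :: "real mat"
  assumes A: "A \<in> carrier_mat n n" and a: "a < n" and c: "c < n"
  shows "summable (\<lambda>k. norm ((A ^\<^sub>m k) $$ (a,c) / fact k))"
proof (rule summable_comparison_test)
  let ?M = "\<Sum>i<n. \<Sum>j<n. \<bar>A $$ (i,j)\<bar>"
  show "summable (\<lambda>k. inverse (fact k) * ?M ^ k)" by (rule summable_exp)
  show "\<exists>N. \<forall>k\<ge>N. norm (norm ((A ^\<^sub>m k) $$ (a,c) / fact k)) \<le> inverse (fact k) * ?M ^ k"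
  proof (intro exI allI impI)
    fix k :: nat
    have "\<bar>(A ^\<^sub>m k) $$ (a,c)\<bar> / fact k \<le> ?M ^ k / fact k"
      using pow_bound[OF A a c] by (intro divide_right_mono) auto
    moreover have "norm (norm ((A ^\<^sub>m k) $$ (a,c) / fact k)) = \<bar>(A ^\<^sub>m k) $$ (a,c)\<bar> / fact k"
      by simp
    moreover have "inverse (fact k) * ?M ^ k = ?M ^ k / fact k"
      by (simp add: divide_inverse mult.commute)
    ultimately show "norm (norm ((A ^\<^sub>m k) $$ (a,c) / fact k)) \<le> inverse (fact k) * ?M ^ k"
      by simp
  qed
qed

lemma mexp_entry: "M \<in> carrier_mat m m \<Longrightarrow> i < m \<Longrightarrow> j < m \<Longrightarrow>
   mexp M $$ (i,j) = (\<Sum>k. (M ^\<^sub>m k) $$ (i,j) / fact k)"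
  unfolding mexp_def by simp

lemma mexp_carrier: "M \<in> carrier_mat m m \<Longrightarrow> mexp M \<in> carrier_mat m m"
  unfolding mexp_def by simp

lemma ssum_AA:
  assumes A: "A \<in> carrier_mat n n"
  shows "ssum A A = 2 \<cdot>\<^sub>m skron (1\<^sub>m n) A"
proof -
  have "ssum A A = skron (1\<^sub>m n) A + skron (1\<^sub>m n) A"
    unfolding ssum_def using A skron_comm_I[OF A] by simp
  also have "\<dots> = 2 \<cdot>\<^sub>m skron (1\<^sub>m n) A"
    using S_carrier[OF A] by (intro eq_matI) auto
  finally show ?thesis .
qed

lemma ssum_pow_entry:
  assumes A: "A \<in> carrier_mat n n" and l: "l < tri n" "l' < tri n"
  shows "((ssum A A) ^\<^sub>m k) $$ (l,l') =
     (\<Sum>i\<le>k. real (k choose i) * sip n l (A ^\<^sub>m i * sym_basis n l' * transpose_mat (A ^\<^sub>m (k - i))))"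
proof -
  have "(ssum A A) ^\<^sub>m k = 2 ^ k \<cdot>\<^sub>m (skron (1\<^sub>m n) A ^\<^sub>m k)"
    unfolding ssum_AA[OF A] by (rule pow_smult[OF S_carrier[OF A]])
  moreover have Sk: "skron (1\<^sub>m n) A ^\<^sub>m k \<in> carrier_mat (tri n) (tri n)" using S_carrier[OF A] by simp
  ultimately show ?thesis using S_pow_entry[OF A l, of k] l carrier_matD[OF Sk] by (simp add: atLeast0AtMost)
qed

lemma term_eq:
  fixes A :: "real mat"
  assumes A: "A \<in> carrier_mat n n" and l: "l < tri n" "l' < tri n"
  shows "((ssum A A) ^\<^sub>m k) $$ (l,l') / fact k =
    (\<Sum>a<n. \<Sum>b<n. \<Sum>d<n. \<Sum>c<n. sym_basis n l $$ (a,b) * sym_basis n l' $$ (c,d) *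
       (\<Sum>i\<le>k. ((A ^\<^sub>m i) $$ (a,c) / fact i) * ((A ^\<^sub>m (k - i)) $$ (b,d) / fact (k - i))))"
proof -
  let ?e = "sym_basis n l" and ?E = "sym_basis n l'"
  have pw: "real (k choose i) / fact k * sip n l (A ^\<^sub>m i * ?E * transpose_mat (A ^\<^sub>m (k - i))) =
     (\<Sum>a<n. \<Sum>b<n. \<Sum>d<n. \<Sum>c<n. ?e $$ (a,b) * ?E $$ (c,d) *
       (((A ^\<^sub>m i) $$ (a,c) / fact i) * ((A ^\<^sub>m (k - i)) $$ (b,d) / fact (k - i))))"
    if i: "i \<le> k" for i
  proof -
    have cf: "real (k choose i) / fact k = 1 / (fact i * fact (k - i))"
      using binomial_fact[OF i, where 'a = real] by (simp add: field_simps)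
    have "sip n l (A ^\<^sub>m i * ?E * transpose_mat (A ^\<^sub>m (k - i))) =
      (\<Sum>a<n. \<Sum>b<n. \<Sum>d<n. \<Sum>c<n. ?e $$ (a,b) * (A ^\<^sub>m i) $$ (a,c) * ?E $$ (c,d) * (A ^\<^sub>m (k - i)) $$ (b,d))"
      using A sym_basis_carrier[of n l'] by (subst ip_triple) (auto intro!: sum.cong)
    then show ?thesis unfolding cf
      by (simp add: sum_distrib_left field_simps)
  qed
  have "((ssum A A) ^\<^sub>m k) $$ (l,l') / fact k =
     (\<Sum>i\<le>k. real (k choose i) / fact k * sip n l (A ^\<^sub>m i * ?E * transpose_mat (A ^\<^sub>m (k - i))))"
    unfolding ssum_pow_entry[OF A l] by (simp add: sum_divide_distrib)
  also have "\<dots> = (\<Sum>i\<le>k. \<Sum>a<n. \<Sum>b<n. \<Sum>d<n. \<Sum>c<n. ?e $$ (a,b) * ?E $$ (c,d) *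
       (((A ^\<^sub>m i) $$ (a,c) / fact i) * ((A ^\<^sub>m (k - i)) $$ (b,d) / fact (k - i))))"
    by (rule sum.cong[OF refl], rule pw, simp)
  also have "\<dots> = (\<Sum>a<n. \<Sum>b<n. \<Sum>d<n. \<Sum>c<n. \<Sum>i\<le>k. ?e $$ (a,b) * ?E $$ (c,d) *
       (((A ^\<^sub>m i) $$ (a,c) / fact i) * ((A ^\<^sub>m (k - i)) $$ (b,d) / fact (k - i))))"
    by (simp only: sum.swap[of _ "{..k}"])
  also have "\<dots> = (\<Sum>a<n. \<Sum>b<n. \<Sum>d<n. \<Sum>c<n. ?e $$ (a,b) * ?E $$ (c,d) *
       (\<Sum>i\<le>k. ((A ^\<^sub>m i) $$ (a,c) / fact i) * ((A ^\<^sub>m (k - i)) $$ (b,d) / fact (k - i))))"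
    by (simp only: sum_distrib_left)
  finally show ?thesis .
qed

lemma part_b:
  fixes A :: "real mat"
  assumes A: "A \<in> carrier_mat n n"
  shows "mexp (ssum A A) = skron (mexp A) (mexp A)"
proof -
  have SS: "ssum A A \<in> carrier_mat (tri n) (tri n)"
    unfolding ssum_AA[OF A] using S_carrier[OF A] by simp
  have eA: "mexp A \<in> carrier_mat n n" by (rule mexp_carrier[OF A])
  have R: "skron (mexp A) (mexp A) \<in> carrier_mat (tri n) (tri n)" by (rule skron_carrier[OF eA eA])
  have L: "mexp (ssum A A) \<in> carrier_mat (tri n) (tri n)" by (rule mexp_carrier[OF SS])
  show ?thesis
  proof (rule eq_matI)
    show "dim_row (mexp (ssum A A)) = dim_row (skron (mexp A) (mexp A))" using L R by simp
    show "dim_col (mexp (ssum A A)) = dim_col (skron (mexp A) (mexp A))" using L R by simp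
    fix l l' assume "l < dim_row (skron (mexp A) (mexp A))" "l' < dim_col (skron (mexp A) (mexp A))"
    then have l: "l < tri n" "l' < tri n" using R by auto
    let ?e = "sym_basis n l" and ?E = "sym_basis n l'"
    let ?al = "\<lambda>a c i. (A ^\<^sub>m i) $$ (a,c) / fact i"
    have "(\<lambda>k. \<Sum>a<n. \<Sum>b<n. \<Sum>d<n. \<Sum>c<n. ?e $$ (a,b) * ?E $$ (c,d) * (\<Sum>i\<le>k. ?al a c i * ?al b d (k - i)))
      sums (\<Sum>a<n. \<Sum>b<n. \<Sum>d<n. \<Sum>c<n. ?e $$ (a,b) * ?E $$ (c,d) * (suminf (?al a c) * suminf (?al b d)))"
    proof (intro sums_sum sums_mult)
      fix a b d c assume "a \<in> {..<n}" "b \<in> {..<n}" "d \<in> {..<n}" "c \<in> {..<n}"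
      then show "(\<lambda>k. \<Sum>i\<le>k. ?al a c i * ?al b d (k - i)) sums (suminf (?al a c) * suminf (?al b d))"
        using A by (intro Cauchy_product_sums summable_alpha) auto
    qed
    moreover have "(\<lambda>k. ((ssum A A) ^\<^sub>m k) $$ (l,l') / fact k) =
      (\<lambda>k. \<Sum>a<n. \<Sum>b<n. \<Sum>d<n. \<Sum>c<n. ?e $$ (a,b) * ?E $$ (c,d) * (\<Sum>i\<le>k. ?al a c i * ?al b d (k - i)))"
      using term_eq[OF A l] by simp
    ultimately have s: "(\<lambda>k. ((ssum A A) ^\<^sub>m k) $$ (l,l') / fact k) sums
        (\<Sum>a<n. \<Sum>b<n. \<Sum>d<n. \<Sum>c<n. ?e $$ (a,b) * ?E $$ (c,d) * (suminf (?al a c) * suminf (?al b d)))"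
      by simp
    have "mexp (ssum A A) $$ (l,l') = (\<Sum>k. ((ssum A A) ^\<^sub>m k) $$ (l,l') / fact k)"
      using mexp_entry[OF SS l] .
    also have "\<dots> = (\<Sum>a<n. \<Sum>b<n. \<Sum>d<n. \<Sum>c<n. ?e $$ (a,b) * ?E $$ (c,d) * (suminf (?al a c) * suminf (?al b d)))"
      using s by (rule sums_unique[symmetric])
    also have "\<dots> = (\<Sum>a<n. \<Sum>b<n. \<Sum>d<n. \<Sum>c<n. ?e $$ (a,b) * mexp A $$ (a,c) * ?E $$ (c,d) * transpose_mat (mexp A) $$ (d,b))"
      using A eA by (intro sum.cong refl) (simp add: mexp_entry mult_ac)
    also have "\<dots> = sip n l (mexp A * ?E * transpose_mat (mexp A))"
      using eA sym_basis_carrier[of n l'] by (subst ip_triple) auto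
    also have "\<dots> = skron (mexp A) (mexp A) $$ (l,l')"
      using skron_entry[OF eA eA l] by simp
    finally show "mexp (ssum A A) $$ (l,l') = skron (mexp A) (mexp A) $$ (l,l')" .
  qed
qed

definition A2 :: "real mat" where
  "A2 = mat 2 2 (\<lambda>(i,j). if i = 0 \<and> j = 1 then 1 else 0)"

lemma A2_carrier: "A2 \<in> carrier_mat 2 2"
  unfolding A2_def by simp

lemma A2_entry: "i < 2 \<Longrightarrow> j < 2 \<Longrightarrow> A2 $$ (i,j) = (if i = 0 \<and> j = 1 then 1 else 0)"
  unfolding A2_def by simp

lemma sum2: "(\<Sum>i<(2::nat). f i) = f 0 + f 1"
  by (simp add: numeral_2_eq_2)

lemma mult2:
  assumes "P \<in> carrier_mat 2 2" "Q \<in> carrier_mat 2 2" "i < 2" "j < 2"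
  shows "(P * Q) $$ (i,j) = P $$ (i,0) * Q $$ (0,j) + P $$ (i,1) * Q $$ (1,j)"
  using mult_entry[OF assms] by (simp add: sum2)

lemma A2_sq: "A2 * A2 = 0\<^sub>m 2 2"
proof (rule eq_matI)
  fix i j assume "i < dim_row (0\<^sub>m 2 2 :: real mat)" "j < dim_col (0\<^sub>m 2 2 :: real mat)"
  then have ij: "i < 2" "j < 2" by auto
  show "(A2 * A2) $$ (i,j) = 0\<^sub>m 2 2 $$ (i,j)"
    using ij by (simp add: mult2[OF A2_carrier A2_carrier ij] A2_entry)
qed (use A2_carrier in auto)

lemma A2_pow: "2 \<le> j \<Longrightarrow> A2 ^\<^sub>m j = 0\<^sub>m 2 2"
proof (induction j)
  case 0 then show ?case by simp
next
  case (Suc j)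
  show ?case
  proof (cases "j = 1")
    case True
    have "A2 ^\<^sub>m Suc j = 1\<^sub>m 2 * A2 * A2" using True A2_carrier by (simp add: numeral_2_eq_2)
    also have "\<dots> = A2 * A2" using A2_carrier by simp
    finally show ?thesis using A2_sq by simp
  next
    case False
    then have "2 \<le> j" using Suc.prems by auto
    then have "A2 ^\<^sub>m j = 0\<^sub>m 2 2" by (rule Suc.IH)
    then show ?thesis using A2_carrier by (simp add: left_mult_zero_mat)
  qed
qed

lemma tri2: "tri 2 = 3" by (simp add: tri_def)

lemma sym_pairs2: "sym_pairs 2 = [(0,0),(0,1),(1,1)]" by (simp add: sym_pairs_def upt_rec)

lemma e0: "i < 2 \<Longrightarrow> j < 2 \<Longrightarrow> sym_basis 2 0 $$ (i,j) = (if i = 0 \<and> j = 0 then 1 else 0)"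
  by (simp add: sym_basis_bv sym_pairs2 bv_diag)

lemma e2: "i < 2 \<Longrightarrow> j < 2 \<Longrightarrow> sym_basis 2 2 $$ (i,j) = (if i = 1 \<and> j = 1 then 1 else 0)"
  by (simp add: sym_basis_bv sym_pairs2 bv_diag)

lemma sip20: "Z \<in> carrier_mat 2 2 \<Longrightarrow> sip 2 0 Z = Z $$ (0,0)"
  unfolding sip_def by (simp add: sum2 e0)

definition tt :: "nat \<Rightarrow> nat \<Rightarrow> real" where
  "tt i j = sip 2 0 (A2 ^\<^sub>m i * sym_basis 2 2 * transpose_mat (A2 ^\<^sub>m j))"

lemma E2_carrier: "sym_basis 2 2 \<in> carrier_mat 2 2" by (rule sym_basis_carrier)

lemma tt_zero: "2 \<le> i \<or> 2 \<le> j \<Longrightarrow> tt i j = 0"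
proof -
  assume h: "2 \<le> i \<or> 2 \<le> j"
  have "A2 ^\<^sub>m i * sym_basis 2 2 * transpose_mat (A2 ^\<^sub>m j) = 0\<^sub>m 2 2"
  proof (cases "2 \<le> i")
    case True
    then show ?thesis using A2_pow[OF True] E2_carrier A2_carrier
      by (simp add: left_mult_zero_mat)
  next
    case False
    then have j: "2 \<le> j" using h by auto
    have "transpose_mat (A2 ^\<^sub>m j) = 0\<^sub>m 2 2" using A2_pow[OF j] by (intro eq_matI) auto
    then show ?thesis using E2_carrier A2_carrier
      by (simp add: right_mult_zero_mat)
  qed
  then show ?thesis unfolding tt_def by (simp add: sip20)
qed

lemma A2_pow1: "A2 ^\<^sub>m 1 = A2" using A2_carrier by simp
lemma A2_pow0: "A2 ^\<^sub>m 0 = 1\<^sub>m 2" using A2_carrier by simp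

lemma tt01: "tt 0 1 = 0"
proof -
  have c: "sym_basis 2 2 * transpose_mat A2 \<in> carrier_mat 2 2" using E2_carrier A2_carrier by simp
  have "tt 0 1 = (sym_basis 2 2 * transpose_mat A2) $$ (0,0)"
    unfolding tt_def A2_pow1 A2_pow0 using c E2_carrier by (simp add: sip20)
  also have "\<dots> = sym_basis 2 2 $$ (0,0) * A2 $$ (0,0) + sym_basis 2 2 $$ (0,1) * A2 $$ (0,1)"
    using mult2[OF E2_carrier, of "transpose_mat A2" 0 0] A2_carrier by simp
  also have "\<dots> = 0" by (simp add: e2 A2_entry)
  finally show ?thesis .
qed

lemma tt10: "tt 1 0 = 0"
proof -
  have c: "A2 * sym_basis 2 2 \<in> carrier_mat 2 2" using E2_carrier A2_carrier by simp
  have "tt 1 0 = (A2 * sym_basis 2 2) $$ (0,0)"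
    unfolding tt_def A2_pow1 A2_pow0 using c right_mult_one_mat[OF c] by (simp add: sip20)
  also have "\<dots> = A2 $$ (0,0) * sym_basis 2 2 $$ (0,0) + A2 $$ (0,1) * sym_basis 2 2 $$ (1,0)"
    using mult2[OF A2_carrier E2_carrier, of 0 0] by simp
  also have "\<dots> = 0" by (simp add: e2 A2_entry)
  finally show ?thesis .
qed

lemma tt11: "tt 1 1 = 1"
proof -
  have c: "A2 * sym_basis 2 2 \<in> carrier_mat 2 2" using E2_carrier A2_carrier by simp
  have c2: "A2 * sym_basis 2 2 * transpose_mat A2 \<in> carrier_mat 2 2" using c A2_carrier by simp
  have "tt 1 1 = (A2 * sym_basis 2 2 * transpose_mat A2) $$ (0,0)"
    unfolding tt_def A2_pow1 using c2 by (simp add: sip20)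
  also have "\<dots> = (A2 * sym_basis 2 2) $$ (0,0) * A2 $$ (0,0) + (A2 * sym_basis 2 2) $$ (0,1) * A2 $$ (0,1)"
    using mult2[OF c, of "transpose_mat A2" 0 0] A2_carrier by simp
  also have "\<dots> = 1"
    using mult2[OF A2_carrier E2_carrier, of 0 0] mult2[OF A2_carrier E2_carrier, of 0 1]
    by (simp add: e2 A2_entry)
  finally show ?thesis .
qed

lemma tt00: "tt 0 0 = 0"
proof -
  have "tt 0 0 = sym_basis 2 2 $$ (0,0)"
    unfolding tt_def A2_pow0 using E2_carrier by (simp add: sip20)
  then show ?thesis by (simp add: e2)
qed

lemma skron_I0: "skron (1\<^sub>m 2) (0\<^sub>m 2 2) = 0\<^sub>m (tri 2) (tri 2)"
proof (rule eq_matI)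
  have c: "skron (1\<^sub>m 2) (0\<^sub>m 2 2) \<in> carrier_mat (tri 2) (tri 2)"
    by (rule skron_carrier) auto
  fix l l' assume "l < dim_row (0\<^sub>m (tri 2) (tri 2) :: real mat)" "l' < dim_col (0\<^sub>m (tri 2) (tri 2) :: real mat)"
  then have l: "l < tri 2" "l' < tri 2" by auto
  have "skron (1\<^sub>m 2) (0\<^sub>m 2 2) $$ (l,l') = sip 2 l (0\<^sub>m 2 2 * sym_basis 2 l' * transpose_mat (1\<^sub>m 2))"
    using skron_entry[OF one_carrier_mat zero_carrier_mat l] .
  also have "0\<^sub>m 2 2 * sym_basis 2 l' * transpose_mat (1\<^sub>m 2) = (0\<^sub>m 2 2 :: real mat)"
    using sym_basis_carrier[of 2 l'] by (simp add: left_mult_zero_mat)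
  also have "sip 2 l (0\<^sub>m 2 2) = 0" unfolding sip_def by simp
  finally show "skron (1\<^sub>m 2) (0\<^sub>m 2 2) $$ (l,l') = 0\<^sub>m (tri 2) (tri 2) $$ (l,l')" using l by simp
next
  have c: "skron (1\<^sub>m 2) (0\<^sub>m 2 2) \<in> carrier_mat (tri 2) (tri 2)"
    by (rule skron_carrier) auto
  then show "dim_row (skron (1\<^sub>m 2) (0\<^sub>m 2 2)) = dim_row (0\<^sub>m (tri 2) (tri 2) :: real mat)"
    "dim_col (skron (1\<^sub>m 2) (0\<^sub>m 2 2)) = dim_col (0\<^sub>m (tri 2) (tri 2) :: real mat)" by auto
qed

lemma ssum_A2: "ssum A2 (0\<^sub>m 2 2) = skron (1\<^sub>m 2) A2"
proof -
  have d: "dim_row A2 = 2" using A2_carrier by simp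
  have "ssum A2 (0\<^sub>m 2 2) = skron A2 (1\<^sub>m 2) + skron (1\<^sub>m 2) (0\<^sub>m 2 2)"
    unfolding ssum_def d ..
  also have "\<dots> = skron (1\<^sub>m 2) A2 + 0\<^sub>m (tri 2) (tri 2)"
    using skron_comm_I[OF A2_carrier] skron_I0 by simp
  also have "\<dots> = skron (1\<^sub>m 2) A2"
    using S_carrier[OF A2_carrier] by (simp add: right_add_zero_mat)
  finally show ?thesis .
qed

lemma sum3: "(\<Sum>k<(3::nat). g k) = g 0 + g 1 + (g 2 :: real)"
  by (simp add: eval_nat_numeral)

lemma lhs_val: "mexp (ssum A2 (0\<^sub>m 2 2)) $$ (0,2) = 1/4"
proof -
  let ?S = "skron (1\<^sub>m 2) A2"
  have Sc: "?S \<in> carrier_mat (tri 2) (tri 2)" by (rule S_carrier[OF A2_carrier])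
  have pe: "(?S ^\<^sub>m k) $$ (0,2) = (1 / 2 ^ k) * (\<Sum>i\<in>{0..k}. real (k choose i) * tt i (k - i))" for k
    using S_pow_entry[OF A2_carrier, of 0 2 k] unfolding tt_def tri2 by simp
  let ?f = "\<lambda>k. (?S ^\<^sub>m k) $$ (0,2) / fact k"
  have z: "?f k = 0" if "k \<notin> {..<3}" for k
  proof -
    have "tt i (k - i) = 0" if "i \<in> {0..k}" for i
      using \<open>k \<notin> {..<3}\<close> by (intro tt_zero) auto
    then show ?thesis unfolding pe by simp
  qed
  have "mexp (ssum A2 (0\<^sub>m 2 2)) $$ (0,2) = suminf ?f"
    unfolding ssum_A2 using mexp_entry[OF Sc] tri2 by simp
  also have "\<dots> = (\<Sum>k<3. ?f k)" by (rule suminf_finite) (use z in auto)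
  also have "\<dots> = ?f 0 + ?f 1 + ?f 2" by (rule sum3)
  also have "?f 0 + ?f 1 + ?f 2 = 0 + 0 + 1/4"
  proof -
    have f0: "?f 0 = 0" unfolding pe by (simp add: tt00)
    have f1: "?f 1 = 0" unfolding pe by (simp add: tt01[unfolded One_nat_def] tt10[unfolded One_nat_def])
    have f2: "?f 2 = 1/4"
    proof -
      have "{0..2::nat} = {0,1,2}" by auto
      then have "(\<Sum>i\<in>{0..2::nat}. real (2 choose i) * tt i (2 - i)) = tt 0 2 + 2 * tt 1 1 + tt 2 0"
        by simp
      also have "\<dots> = 2" using tt_zero[of 0 2] tt_zero[of 2 0] tt11 by simp
      finally show ?thesis unfolding pe by simp
    qed
    show ?thesis by (simp only: f0 f1 f2)
  qed
  finally show ?thesis by simp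
qed

lemma zero_pow_entry: "((0\<^sub>m 2 2 :: real mat) ^\<^sub>m k) $$ (0,1) = 0"
proof (cases k)
  case 0 then show ?thesis by simp
next
  case (Suc m)
  have "(0\<^sub>m 2 2 :: real mat) ^\<^sub>m m \<in> carrier_mat 2 2" by simp
  then show ?thesis using Suc by (simp add: right_mult_zero_mat)
qed

lemma rhs_val: "skron (mexp A2) (mexp (0\<^sub>m 2 2)) $$ (0,2) = 0"
proof -
  let ?m0 = "mexp (0\<^sub>m 2 2)" and ?mA = "mexp A2" and ?E = "sym_basis 2 2"
  have m0: "?m0 \<in> carrier_mat 2 2" by (rule mexp_carrier) simp
  have mA: "?mA \<in> carrier_mat 2 2" by (rule mexp_carrier[OF A2_carrier])
  have m01: "?m0 $$ (0,1) = 0"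
  proof -
    have "?m0 $$ (0,1) = (\<Sum>k. ((0\<^sub>m 2 2 :: real mat) ^\<^sub>m k) $$ (0,1) / fact k)"
      by (rule mexp_entry) auto
    also have "\<dots> = 0" by (simp only: zero_pow_entry) simp
    finally show ?thesis .
  qed
  have c: "?m0 * ?E \<in> carrier_mat 2 2" using m0 E2_carrier by simp
  have c2: "?m0 * ?E * transpose_mat ?mA \<in> carrier_mat 2 2" using c mA by simp
  have "skron ?mA ?m0 $$ (0,2) = sip 2 0 (?m0 * ?E * transpose_mat ?mA)"
    using skron_entry[OF mA m0, of 0 2] tri2 by simp
  also have "\<dots> = (?m0 * ?E * transpose_mat ?mA) $$ (0,0)" using c2 by (simp add: sip20)
  also have "\<dots> = (?m0 * ?E) $$ (0,0) * ?mA $$ (0,0) + (?m0 * ?E) $$ (0,1) * ?mA $$ (0,1)"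
    using mult2[OF c, of "transpose_mat ?mA" 0 0] mA by simp
  also have "\<dots> = 0"
    using mult2[OF m0 E2_carrier, of 0 0] mult2[OF m0 E2_carrier, of 0 1] m01
    by (simp add: e2)
  finally show ?thesis .
qed

lemma part_c: "mexp (ssum A2 (0\<^sub>m 2 2)) \<noteq> skron (mexp A2) (mexp (0\<^sub>m 2 2))"
proof
  assume "mexp (ssum A2 (0\<^sub>m 2 2)) = skron (mexp A2) (mexp (0\<^sub>m 2 2))"
  then have "mexp (ssum A2 (0\<^sub>m 2 2)) $$ (0,2) = skron (mexp A2) (mexp (0\<^sub>m 2 2)) $$ (0,2)" by simp
  then show False using lhs_val rhs_val by simp
qed

theorem proposition8:
  shows "(\<forall>(n::nat) (A::real mat) (k::nat). A \<in> carrier_mat n n \<longrightarrow>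
            (skron A (1\<^sub>m n)) ^\<^sub>m k = (skron (1\<^sub>m n) A) ^\<^sub>m k \<and>
            (skron (1\<^sub>m n) A) ^\<^sub>m k =
              (1 / 2 ^ k) \<cdot>\<^sub>m msum (tri n)
                 (\<lambda>i. real (k choose i) \<cdot>\<^sub>m skron (A ^\<^sub>m (k - i)) (A ^\<^sub>m i)) {0..k})
       \<and> (\<forall>(n::nat) (A::real mat). A \<in> carrier_mat n n \<longrightarrow>
            mexp (ssum A A) = skron (mexp A) (mexp A))
       \<and> (\<exists>(n::nat) (A::real mat) (B::real mat). A \<in> carrier_mat n n \<and> B \<in> carrier_mat n n \<and>
            mexp (ssum A B) \<noteq> skron (mexp A) (mexp B))"
proof -
  have a: "\<forall>(n::nat) (A::real mat) (k::nat). A \<in> carrier_mat n n \<longrightarrow>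
            (skron A (1\<^sub>m n)) ^\<^sub>m k = (skron (1\<^sub>m n) A) ^\<^sub>m k \<and>
            (skron (1\<^sub>m n) A) ^\<^sub>m k =
              (1 / 2 ^ k) \<cdot>\<^sub>m msum (tri n)
                 (\<lambda>i. real (k choose i) \<cdot>\<^sub>m skron (A ^\<^sub>m (k - i)) (A ^\<^sub>m i)) {0..k}"
    using part_a by blast
  have b: "\<forall>(n::nat) (A::real mat). A \<in> carrier_mat n n \<longrightarrow>
            mexp (ssum A A) = skron (mexp A) (mexp A)"
    using part_b by blast
  have c: "\<exists>(n::nat) (A::real mat) (B::real mat). A \<in> carrier_mat n n \<and> B \<in> carrier_mat n n \<and>
            mexp (ssum A B) \<noteq> skron (mexp A) (mexp B)"
    using A2_carrier part_c by (intro exI[of _ 2] exI[of _ A2] exI[of _ "0\<^sub>m 2 2"]) simp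
  show ?thesis using a b c by blast
qed

end
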